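(* Let $e\ge 1$ and let $(x_n)_{n\in\mathbb{Z}}$ be any doubly infinite path in $X_{PGL_2(F)}$. Then there exist $\alpha,\tau\in\hat G^{(e)}$ such that $\alpha(x_n)=x_{-n}$ and $\tau(x_n)=x_{n+1}$ for all $n\in\mathbb{Z}$.
   Context: Let $F$ be a non-archimedean local field with ring of integers $\mathfrak{o}$, uniformizer $\varpi$, and finite residue field of cardinality $q$. $X=X_{PGL_2(F)}$ is the Bruhat–Tits tree of $PGL_2(F)$: its vertices are homothety classes $[L]$ (under $F^\times$) of $\mathfrak{o}$-lattices $L\subset F^2$, and $[L],[L']$ are joined by an edge iff there are representatives with $\varpi L\subsetneq L'\subsetneq L$; it is a $(q+1)$-regular tree. $d$ is the path-length distance on vertices; $\mathrm{Aut}(X)$ is the group of distance-preserving bijections of the vertex set, with the topology of pointwise convergence. $GL_2(F)$ acts on lattices through its linear action on $F^2$, the centre acts trivially, and this gives an embedding $PGL_2(F)\hookrightarrow\mathrm{Aut}(X)$. For an edge $\eta=\{x_1,x_2\}$ and $e\ge1$, $B(\eta,e)=\{y: \min(d(y,x_1),d(y,x_2))\le e\}$. Define $\hat G^{(e)}=\{g\in\mathrm{Aut}(X):\ \text{for every edge }\eta\ \text{there is } g'\in PGL_2(F)\text{ with } g|_{B(\eta,e)}=g'|_{B(\eta,e)}\}$. A doubly infinite path is a sequence $(x_n)_{n\in\mathbb{Z}}$ of distinct vertices with $x_n,x_{n+1}$ adjacent for all $n$. *)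

theory Defs
  imports Main
begin

text \<open>A non-archimedean local field is modelled as a field carrying a normalised
discrete valuation val (val x is meaningful for x nonzero only; val 0 is ignored)
which is surjective onto the integers, complete for the induced metric, and has
finite residue field.\<close>

definition ring_int :: "('a::field \<Rightarrow> int) \<Rightarrow> 'a set" where
  "ring_int val = {x. x = 0 \<or> 0 \<le> val x}"

definition max_ideal :: "('a::field \<Rightarrow> int) \<Rightarrow> 'a set" where
  "max_ideal val = {x. x = 0 \<or> 1 \<le> val x}"

definition residue_class :: "('a::field \<Rightarrow> int) \<Rightarrow> 'a \<Rightarrow> 'a set" where
  "residue_class val x = {y \<in> ring_int val. y - x \<in> max_ideal val}"

definition nonarch_local_field :: "('a::field \<Rightarrow> int) \<Rightarrow> bool" where
  "nonarch_local_field val \<longleftrightarrow>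
     (\<forall>x y. x \<noteq> 0 \<longrightarrow> y \<noteq> 0 \<longrightarrow> val (x * y) = val x + val y) \<and>
     (\<forall>x y. x \<noteq> 0 \<longrightarrow> y \<noteq> 0 \<longrightarrow> x + y \<noteq> 0 \<longrightarrow> min (val x) (val y) \<le> val (x + y)) \<and>
     (\<forall>k. \<exists>x. x \<noteq> 0 \<and> val x = k) \<and>
     (\<forall>s :: nat \<Rightarrow> 'a.
        (\<forall>N::int. \<exists>M. \<forall>m\<ge>M. \<forall>n\<ge>M. s m - s n = 0 \<or> N \<le> val (s m - s n)) \<longrightarrow>
        (\<exists>l. \<forall>N::int. \<exists>M. \<forall>n\<ge>M. s n - l = 0 \<or> N \<le> val (s n - l))) \<and>
     finite (residue_class val ` ring_int val)"

definition lattice :: "('a::field \<Rightarrow> int) \<Rightarrow> ('a \<times> 'a) set \<Rightarrow> bool" where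
  "lattice val L \<longleftrightarrow> (\<exists>u1 u2 w1 w2. u1 * w2 - u2 * w1 \<noteq> 0 \<and>
      L = {(a * u1 + b * w1, a * u2 + b * w2) | a b. a \<in> ring_int val \<and> b \<in> ring_int val})"

definition scale_set :: "'a::field \<Rightarrow> ('a \<times> 'a) set \<Rightarrow> ('a \<times> 'a) set" where
  "scale_set c L = (\<lambda>(p, r). (c * p, c * r)) ` L"

text \<open>Vertices: homothety classes of lattices, represented as sets of lattices.\<close>

definition hclass :: "('a::field \<times> 'a) set \<Rightarrow> ('a \<times> 'a) set set" where
  "hclass L = {scale_set c L | c. c \<noteq> 0}"

definition vertices :: "('a::field \<Rightarrow> int) \<Rightarrow> ('a \<times> 'a) set set set" where
  "vertices val = {hclass L | L. lattice val L}"

definition adj :: "('a::field \<Rightarrow> int) \<Rightarrow> ('a \<times> 'a) set set \<Rightarrow> ('a \<times> 'a) set set \<Rightarrow> bool" where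
  "adj val x y \<longleftrightarrow> x \<in> vertices val \<and> y \<in> vertices val \<and>
     (\<exists>L\<in>x. \<exists>L'\<in>y. \<exists>\<pi>. \<pi> \<noteq> 0 \<and> val \<pi> = 1 \<and> scale_set \<pi> L \<subset> L' \<and> L' \<subset> L)"

definition dist_tree :: "('a::field \<Rightarrow> int) \<Rightarrow> ('a \<times> 'a) set set \<Rightarrow> ('a \<times> 'a) set set \<Rightarrow> nat" where
  "dist_tree val x y = (LEAST n. \<exists>p :: nat \<Rightarrow> ('a \<times> 'a) set set.
      p 0 = x \<and> p n = y \<and> (\<forall>i<n. adj val (p i) (p (Suc i))))"

definition Aut :: "('a::field \<Rightarrow> int) \<Rightarrow> (('a \<times> 'a) set set \<Rightarrow> ('a \<times> 'a) set set) set" where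
  "Aut val = {g. bij_betw g (vertices val) (vertices val) \<and>
      (\<forall>x\<in>vertices val. \<forall>y\<in>vertices val. dist_tree val (g x) (g y) = dist_tree val x y)}"

text \<open>GL_2(F) matrices (a b; c d) and their action on vertices (centre acts trivially,
so this is the action of PGL_2(F)).\<close>

definition mat_vec :: "'a::field \<times> 'a \<times> 'a \<times> 'a \<Rightarrow> 'a \<times> 'a \<Rightarrow> 'a \<times> 'a" where
  "mat_vec M v = (case M of (a, b, c, d) \<Rightarrow> case v of (p, r) \<Rightarrow> (a * p + b * r, c * p + d * r))"

definition GL2 :: "('a::field \<times> 'a \<times> 'a \<times> 'a) set" where
  "GL2 = {(a, b, c, d). a * d - b * c \<noteq> 0}"

definition mat_act :: "'a::field \<times> 'a \<times> 'a \<times> 'a \<Rightarrow> ('a \<times> 'a) set set \<Rightarrow> ('a \<times> 'a) set set" where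
  "mat_act M x = (\<lambda>L. mat_vec M ` L) ` x"

definition edge_ball :: "('a::field \<Rightarrow> int) \<Rightarrow> ('a \<times> 'a) set set \<Rightarrow> ('a \<times> 'a) set set \<Rightarrow> nat
    \<Rightarrow> ('a \<times> 'a) set set set" where
  "edge_ball val x1 x2 e = {y \<in> vertices val. min (dist_tree val y x1) (dist_tree val y x2) \<le> e}"

definition Ghat :: "('a::field \<Rightarrow> int) \<Rightarrow> nat \<Rightarrow> (('a \<times> 'a) set set \<Rightarrow> ('a \<times> 'a) set set) set" where
  "Ghat val e = {g \<in> Aut val. \<forall>x1 x2. adj val x1 x2 \<longrightarrow>
      (\<exists>M\<in>GL2. \<forall>y\<in>edge_ball val x1 x2 e. g y = mat_act M y)}"

definition doubly_infinite_path :: "('a::field \<Rightarrow> int) \<Rightarrow> (int \<Rightarrow> ('a \<times> 'a) set set) \<Rightarrow> bool" where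
  "doubly_infinite_path val x \<longleftrightarrow> inj x \<and> (\<forall>n. x n \<in> vertices val) \<and>
      (\<forall>n. adj val (x n) (x (n + 1)))"

end

theory Submission
  imports Defs
begin



locale nalf =
  fixes val :: "'a::field \<Rightarrow> int"
  assumes nalf: "nonarch_local_field val"
begin

abbreviation "Ri \<equiv> ring_int val"

definition pw :: "int \<Rightarrow> 'a set" where "pw n = {z. z = 0 \<or> n \<le> val z}"

lemmas parts = nalf[unfolded nonarch_local_field_def]

lemma val_mult: "x \<noteq> 0 \<Longrightarrow> y \<noteq> 0 \<Longrightarrow> val (x * y) = val x + val y"
  using conjunct1[OF parts] by blast

lemma val_add: "x \<noteq> 0 \<Longrightarrow> y \<noteq> 0 \<Longrightarrow> x + y \<noteq> 0 \<Longrightarrow> min (val x) (val y) \<le> val (x + y)"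
  using conjunct1[OF conjunct2[OF parts]] by blast

lemma val_surj: "\<exists>x. x \<noteq> 0 \<and> val x = k"
  using conjunct1[OF conjunct2[OF conjunct2[OF parts]]] by blast

lemma complete: fixes s :: "nat \<Rightarrow> 'a" shows "(\<forall>N::int. \<exists>M. \<forall>m\<ge>M. \<forall>n\<ge>M. s m - s n = 0 \<or> N \<le> val (s m - s n)) \<Longrightarrow>
        (\<exists>l. \<forall>N::int. \<exists>M. \<forall>n\<ge>M. s n - l = 0 \<or> N \<le> val (s n - l))"
  using spec[OF conjunct1[OF conjunct2[OF conjunct2[OF conjunct2[OF parts]]]], of s] by (rule mp)

lemma val_one[simp]: "val 1 = 0"
  using val_mult[of 1 1] by simp

lemma val_inverse: "x \<noteq> 0 \<Longrightarrow> val (inverse x) = - val x"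
  using val_mult[of x "inverse x"] by simp

lemma val_m1[simp]: "val (-1) = 0"
  using val_mult[of "-1" "-1"] by simp

lemma val_uminus[simp]: "val (- x) = val x"
proof (cases "x = 0")
  case True then show ?thesis by simp
next
  case False
  then show ?thesis using val_mult[of "-1" x] by simp
qed

lemma val_divide: "x \<noteq> 0 \<Longrightarrow> y \<noteq> 0 \<Longrightarrow> val (x / y) = val x - val y"
  by (simp add: divide_inverse val_mult val_inverse)

lemma val_power: "x \<noteq> 0 \<Longrightarrow> val (x ^ k) = int k * val x"
  by (induction k) (auto simp: val_mult algebra_simps)

lemma pw_add: "a \<in> pw n \<Longrightarrow> b \<in> pw n \<Longrightarrow> a + b \<in> pw n"
proof -
  assume a: "a \<in> pw n" and b: "b \<in> pw n"
  show ?thesis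
  proof (cases "a = 0 \<or> b = 0 \<or> a + b = 0")
    case True then show ?thesis using a b by (auto simp: pw_def)
  next
    case False
    then have "min (val a) (val b) \<le> val (a + b)" using val_add[of a b] by blast
    moreover have "n \<le> val a" "n \<le> val b" using a b False unfolding pw_def by auto
    ultimately have "n \<le> val (a + b)" by linarith
    then show ?thesis unfolding pw_def by simp
  qed
qed

lemma pw_uminus: "a \<in> pw n \<Longrightarrow> - a \<in> pw n"
  unfolding pw_def by auto

lemma pw_diff: "a \<in> pw n \<Longrightarrow> b \<in> pw n \<Longrightarrow> a - b \<in> pw n"
  using pw_add[of a n "-b"] pw_uminus[of b n] by simp

lemma pw_mult: "a \<in> pw n \<Longrightarrow> b \<in> pw m \<Longrightarrow> a * b \<in> pw (n + m)"
  unfolding pw_def by (cases "a = 0"; cases "b = 0") (auto simp: val_mult)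

lemma pw_mono: "a \<in> pw n \<Longrightarrow> m \<le> n \<Longrightarrow> a \<in> pw m"
  unfolding pw_def by auto

lemma pw_zero[simp]: "0 \<in> pw n" unfolding pw_def by simp

lemma O_pw: "Ri = pw 0" unfolding pw_def ring_int_def by auto

lemma O_add: "a \<in> Ri \<Longrightarrow> b \<in> Ri \<Longrightarrow> a + b \<in> Ri" using pw_add O_pw by auto
lemma O_diff: "a \<in> Ri \<Longrightarrow> b \<in> Ri \<Longrightarrow> a - b \<in> Ri" using pw_diff O_pw by auto
lemma O_uminus: "a \<in> Ri \<Longrightarrow> - a \<in> Ri" using pw_uminus O_pw by auto
lemma O_mult: "a \<in> Ri \<Longrightarrow> b \<in> Ri \<Longrightarrow> a * b \<in> Ri" using pw_mult[of a 0 b 0] O_pw by auto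
lemma O_0[simp]: "0 \<in> Ri" and O_1[simp]: "1 \<in> Ri" unfolding ring_int_def by auto

lemma pw_O: "a \<in> pw n \<Longrightarrow> 0 \<le> n \<Longrightarrow> a \<in> Ri" using pw_mono O_pw by auto

lemma O_mult_pw: "a \<in> Ri \<Longrightarrow> b \<in> pw n \<Longrightarrow> a * b \<in> pw n" using pw_mult[of a 0 b n] O_pw by auto

lemma unit_inv: "a \<noteq> 0 \<Longrightarrow> val a = 0 \<Longrightarrow> inverse a \<in> Ri"
  unfolding ring_int_def by (simp add: val_inverse)

lemma O_cases: "a \<in> Ri \<Longrightarrow> a \<in> pw 1 \<or> (a \<noteq> 0 \<and> val a = 0)"
  unfolding ring_int_def pw_def by auto


definition sv :: "'a \<Rightarrow> 'a \<times> 'a \<Rightarrow> 'a \<times> 'a" where "sv r v = (r * fst v, r * snd v)"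
definition ad :: "'a \<times> 'a \<Rightarrow> 'a \<times> 'a \<Rightarrow> 'a \<times> 'a" where "ad u v = (fst u + fst v, snd u + snd v)"
definition det2 :: "'a \<times> 'a \<Rightarrow> 'a \<times> 'a \<Rightarrow> 'a" where "det2 u w = fst u * snd w - snd u * fst w"
definition lat :: "'a \<times> 'a \<Rightarrow> 'a \<times> 'a \<Rightarrow> ('a \<times> 'a) set" where
  "lat u w = {ad (sv r u) (sv s w) | r s. r \<in> Ri \<and> s \<in> Ri}"
definition modc :: "('a \<times> 'a) set \<Rightarrow> bool" where
  "modc L \<longleftrightarrow> (\<forall>x\<in>L. \<forall>y\<in>L. ad x y \<in> L) \<and> (\<forall>r\<in>Ri. \<forall>x\<in>L. sv r x \<in> L)"

lemma sv_ad_simps[simp]: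
  "sv r (a, b) = (r * a, r * b)" "ad (a, b) (c, d) = (a + c, b + d)"
  "fst (sv r v) = r * fst v" "snd (sv r v) = r * snd v"
  "fst (ad u v) = fst u + fst v" "snd (ad u v) = snd u + snd v"
  by (auto simp: sv_def ad_def)

lemma sv_one[simp]: "sv 1 v = v" by (simp add: sv_def)

lemma mem_lat: "z \<in> lat u w \<longleftrightarrow> (\<exists>r s. r \<in> Ri \<and> s \<in> Ri \<and> z = ad (sv r u) (sv s w))"
  unfolding lat_def by blast

lemma modc_lat: "modc (lat u w)"
  unfolding modc_def
proof (intro conjI ballI)
  fix x y assume "x \<in> lat u w" "y \<in> lat u w"
  then obtain r s r' s' where "r \<in> Ri" "s \<in> Ri" "r' \<in> Ri" "s' \<in> Ri"
    "x = ad (sv r u) (sv s w)" "y = ad (sv r' u) (sv s' w)" unfolding mem_lat by blast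
  then show "ad x y \<in> lat u w" unfolding mem_lat
    by (intro exI[of _ "r + r'"] exI[of _ "s + s'"]) (auto simp: O_add prod_eq_iff algebra_simps)
next
  fix c x assume "c \<in> Ri" "x \<in> lat u w"
  then obtain r s where "r \<in> Ri" "s \<in> Ri" "x = ad (sv r u) (sv s w)" unfolding mem_lat by blast
  then show "sv c x \<in> lat u w" unfolding mem_lat
    using \<open>c \<in> Ri\<close>
    by (intro exI[of _ "c * r"] exI[of _ "c * s"]) (auto simp: O_mult prod_eq_iff algebra_simps)
qed

lemma lat_gen1: "u \<in> lat u w"
  unfolding mem_lat by (rule exI[of _ 1], rule exI[of _ 0]) (simp add: ad_def sv_def)
lemma lat_gen2: "w \<in> lat u w"
  unfolding mem_lat by (rule exI[of _ 0], rule exI[of _ 1]) (simp add: ad_def sv_def)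
lemmas lat_gen = lat_gen1 lat_gen2

lemma lat_least: "modc L \<Longrightarrow> u \<in> L \<Longrightarrow> w \<in> L \<Longrightarrow> lat u w \<subseteq> L"
  unfolding modc_def lat_def by blast

lemma lat_sub: "u \<in> lat u' w' \<Longrightarrow> w \<in> lat u' w' \<Longrightarrow> lat u w \<subseteq> lat u' w'"
  by (rule lat_least[OF modc_lat])

lemma lat_eqI: "u \<in> lat u' w' \<Longrightarrow> w \<in> lat u' w' \<Longrightarrow> u' \<in> lat u w \<Longrightarrow> w' \<in> lat u w
   \<Longrightarrow> lat u w = lat u' w'"
  using lat_sub by blast

lemma lat_comm: "lat u w = lat w u"
  by (intro lat_eqI lat_gen)

lemma modc_diff: "modc L \<Longrightarrow> x \<in> L \<Longrightarrow> y \<in> L \<Longrightarrow> ad x (sv (-1) y) \<in> L"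
  unfolding modc_def using O_uminus[OF O_1] by blast

lemma lat_mem_comb: "r \<in> Ri \<Longrightarrow> s \<in> Ri \<Longrightarrow> ad (sv r u) (sv s w) \<in> lat u w"
  unfolding mem_lat by blast

lemma lat_shear: "r \<in> Ri \<Longrightarrow> lat (ad u (sv r w)) w = lat u w"
proof (rule lat_eqI)
  assume r: "r \<in> Ri"
  show "ad u (sv r w) \<in> lat u w" using lat_mem_comb[OF O_1 r, of u w] by simp
  show "w \<in> lat u w" by (rule lat_gen)
  show "u \<in> lat (ad u (sv r w)) w"
  proof -
    have "ad (sv 1 (ad u (sv r w))) (sv (- r) w) = u" by (simp add: ad_def sv_def)
    then show ?thesis using lat_mem_comb[OF O_1 O_uminus[OF r], of "ad u (sv r w)" w] by metis
  qed
  show "w \<in> lat (ad u (sv r w)) w" by (rule lat_gen)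
qed

lemma lat_unit: "r \<in> Ri \<Longrightarrow> s \<noteq> 0 \<Longrightarrow> val s = 0 \<Longrightarrow> lat u (ad (sv r u) (sv s w)) = lat u w"
proof (rule lat_eqI)
  assume r: "r \<in> Ri" and s: "s \<noteq> 0" "val s = 0"
  have sO: "s \<in> Ri" using s unfolding ring_int_def by simp
  have si: "inverse s \<in> Ri" using unit_inv s by blast
  show "u \<in> lat u w" by (rule lat_gen)
  show "ad (sv r u) (sv s w) \<in> lat u w" using lat_mem_comb r sO by blast
  show "u \<in> lat u (ad (sv r u) (sv s w))" by (rule lat_gen)
  have "ad (sv (- r * inverse s) u) (sv (inverse s) (ad (sv r u) (sv s w))) = w"
    using s by (simp add: prod_eq_iff algebra_simps)
  then show "w \<in> lat u (ad (sv r u) (sv s w))"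
    using lat_mem_comb[OF O_mult[OF O_uminus[OF r] si] si] by metis
qed

lemma scale_lat: "scale_set c (lat u w) = lat (sv c u) (sv c w)"
proof -
  have e: "(\<lambda>(p, r). (c * p, c * r)) (ad (sv r u) (sv s w)) = ad (sv r (sv c u)) (sv s (sv c w))" for r s
    by (simp add: ad_def sv_def algebra_simps)
  show ?thesis unfolding scale_set_def lat_def
  proof (intro equalityI subsetI)
    fix z assume "z \<in> (\<lambda>(p, r). (c * p, c * r)) ` {ad (sv r u) (sv s w) |r s. r \<in> Ri \<and> s \<in> Ri}"
    then obtain r s where "r \<in> Ri" "s \<in> Ri" "z = (\<lambda>(p, r). (c * p, c * r)) (ad (sv r u) (sv s w))" by blast
    then show "z \<in> {ad (sv r (sv c u)) (sv s (sv c w)) |r s. r \<in> Ri \<and> s \<in> Ri}" unfolding e by blast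
  next
    fix z assume "z \<in> {ad (sv r (sv c u)) (sv s (sv c w)) |r s. r \<in> Ri \<and> s \<in> Ri}"
    then obtain r s where "r \<in> Ri" "s \<in> Ri" "z = ad (sv r (sv c u)) (sv s (sv c w))" by blast
    then show "z \<in> (\<lambda>(p, r). (c * p, c * r)) ` {ad (sv r u) (sv s w) |r s. r \<in> Ri \<and> s \<in> Ri}"
      unfolding e[symmetric] by blast
  qed
qed

lemma lattice_iff: "lattice val L \<longleftrightarrow> (\<exists>u w. det2 u w \<noteq> 0 \<and> L = lat u w)"
proof -
  have e: "{(a * u1 + b * w1, a * u2 + b * w2) |a b. a \<in> Ri \<and> b \<in> Ri} = lat (u1, u2) (w1, w2)" for u1 u2 w1 w2
    unfolding lat_def by simp
  show ?thesis
  proof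
    assume "lattice val L"
    then obtain u1 u2 w1 w2 where "u1 * w2 - u2 * w1 \<noteq> 0"
      "L = {(a * u1 + b * w1, a * u2 + b * w2) |a b. a \<in> Ri \<and> b \<in> Ri}"
      unfolding lattice_def by blast
    then show "\<exists>u w. det2 u w \<noteq> 0 \<and> L = lat u w" unfolding e
      by (intro exI[of _ "(u1, u2)"] exI[of _ "(w1, w2)"]) (simp add: det2_def)
  next
    assume "\<exists>u w. det2 u w \<noteq> 0 \<and> L = lat u w"
    then obtain u1 u2 w1 w2 where "det2 (u1, u2) (w1, w2) \<noteq> 0" "L = lat (u1, u2) (w1, w2)" by force
    then show "lattice val L" unfolding lattice_def e[symmetric] det2_def by auto
  qed
qed

lemma coord_unique:
  assumes "det2 u w \<noteq> 0" "ad (sv r u) (sv s w) = ad (sv r' u) (sv s' w)"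
  shows "r = r' \<and> s = s'"
proof -
  obtain u1 u2 w1 w2 where uw: "u = (u1, u2)" "w = (w1, w2)" by fastforce
  have e1: "(r - r') * u1 + (s - s') * w1 = 0" and e2: "(r - r') * u2 + (s - s') * w2 = 0"
    using assms(2) uw by (auto simp: algebra_simps)
  have d: "u1 * w2 - u2 * w1 \<noteq> 0" using assms(1) uw by (simp add: det2_def)
  have "(r - r') * (u1 * w2 - u2 * w1) = 0"
  proof -
    have "(r - r') * (u1 * w2 - u2 * w1) = w2 * ((r - r') * u1 + (s - s') * w1) - w1 * ((r - r') * u2 + (s - s') * w2)"
      by (simp add: algebra_simps)
    then show ?thesis using e1 e2 by simp
  qed
  moreover have "(s - s') * (u1 * w2 - u2 * w1) = 0"
  proof -
    have "(s - s') * (u1 * w2 - u2 * w1) = u1 * ((r - r') * u2 + (s - s') * w2) - u2 * ((r - r') * u1 + (s - s') * w1)"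
      by (simp add: algebra_simps)
    then show ?thesis using e1 e2 by simp
  qed
  ultimately show ?thesis using d by simp
qed

end



context nalf begin

definition pi :: 'a where "pi = (SOME x. x \<noteq> 0 \<and> val x = 1)"

lemma pi_props: "pi \<noteq> 0" "val pi = 1"
  using someI_ex[OF val_surj[of 1]] unfolding pi_def by auto

lemma pi_Ri: "pi \<in> Ri" using pi_props unfolding ring_int_def by simp

lemma div_pi: "z \<in> pw 1 \<Longrightarrow> z / pi \<in> Ri"
  using pi_props unfolding pw_def ring_int_def by (cases "z = 0") (auto simp: val_divide)

lemma unit_Ri: "r \<noteq> 0 \<Longrightarrow> val r = 0 \<Longrightarrow> r \<in> Ri" unfolding ring_int_def by simp

lemma piL: "r \<in> pw 1 \<Longrightarrow> s \<in> pw 1 \<Longrightarrow> ad (sv r a) (sv s b) \<in> lat (sv pi a) (sv pi b)"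
proof -
  assume r: "r \<in> pw 1" and s: "s \<in> pw 1"
  have "ad (sv r a) (sv s b) = ad (sv (r / pi) (sv pi a)) (sv (s / pi) (sv pi b))"
    using pi_props by (simp add: prod_eq_iff)
  then show ?thesis using lat_mem_comb[OF div_pi[OF r] div_pi[OF s]] by metis
qed

lemma modc_sv: "modc L \<Longrightarrow> r \<in> Ri \<Longrightarrow> x \<in> L \<Longrightarrow> sv r x \<in> L" unfolding modc_def by blast
lemma modc_ad: "modc L \<Longrightarrow> x \<in> L \<Longrightarrow> y \<in> L \<Longrightarrow> ad x y \<in> L" unfolding modc_def by blast

lemma step:
  assumes d: "det2 a b \<noteq> 0" and m: "modc L'"
    and s1: "lat (sv pi a) (sv pi b) \<subset> L'" and s2: "L' \<subset> lat a b"
  shows "(\<exists>t\<in>Ri. L' = lat (ad a (sv t b)) (sv pi b)) \<or> L' = lat b (sv pi a)"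
proof -
  have notboth: "\<not> (a \<in> L' \<and> b \<in> L')"
    using lat_least[OF m, of a b] s2 by blast
  have pib: "sv pi b \<in> L'" and pia: "sv pi a \<in> L'" using s1 lat_gen by blast+
  obtain v where v: "v \<in> L'" "v \<notin> lat (sv pi a) (sv pi b)" using s1 by blast
  then have "v \<in> lat a b" using s2 by blast
  then obtain r s where rs: "r \<in> Ri" "s \<in> Ri" "v = ad (sv r a) (sv s b)" unfolding mem_lat by blast
  have m1: "- 1 \<in> Ri" by (simp add: O_uminus)
  show ?thesis
  proof (cases "r \<in> pw 1")
    case False
    then have ru: "r \<noteq> 0" "val r = 0" using O_cases[OF rs(1)] by auto
    define t where "t = s * inverse r"
    have tR: "t \<in> Ri" unfolding t_def using O_mult[OF rs(2) unit_inv[OF ru]] .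
    define e where "e = ad a (sv t b)"
    have "e = sv (inverse r) v" unfolding e_def t_def rs(3) using ru by (simp add: prod_eq_iff field_simps)
    then have eL: "e \<in> L'" using modc_sv[OF m unit_inv[OF ru] v(1)] by simp
    have "L' = lat e (sv pi b)"
    proof
      show "lat e (sv pi b) \<subseteq> L'" by (rule lat_least[OF m eL pib])
      show "L' \<subseteq> lat e (sv pi b)"
      proof
        fix z assume zL: "z \<in> L'"
        then have "z \<in> lat a b" using s2 by blast
        then obtain p q where pq: "p \<in> Ri" "q \<in> Ri" "z = ad (sv p a) (sv q b)" unfolding mem_lat by blast
        define k where "k = q - p * t"
        have kR: "k \<in> Ri" unfolding k_def using O_diff[OF pq(2) O_mult[OF pq(1) tR]] .
        have z'eq: "ad z (sv (- p) e) = sv k b" unfolding k_def e_def pq(3) by (simp add: prod_eq_iff algebra_simps)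
        have z'L: "sv k b \<in> L'" using modc_ad[OF m zL modc_sv[OF m O_uminus[OF pq(1)] eL]] z'eq by simp
        show "z \<in> lat e (sv pi b)"
        proof (cases "k \<in> pw 1")
          case True
          have "z = ad (sv p e) (sv (k / pi) (sv pi b))"
            unfolding pq(3) e_def k_def using pi_props by (simp add: prod_eq_iff field_simps)
          then show ?thesis using lat_mem_comb[OF pq(1) div_pi[OF True]] by metis
        next
          case False
          then have ku: "k \<noteq> 0" "val k = 0" using O_cases[OF kR] by auto
          have "b = sv (inverse k) (sv k b)" using ku by (simp add: prod_eq_iff)
          then have bL: "b \<in> L'" using modc_sv[OF m unit_inv[OF ku] z'L] by simp
          have "a = ad e (sv (- t) b)" unfolding e_def by (simp add: prod_eq_iff)
          then have "a \<in> L'" using modc_ad[OF m eL modc_sv[OF m O_uminus[OF tR] bL]] by simp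
          then show ?thesis using bL notboth by blast
        qed
      qed
    qed
    then show ?thesis using tR unfolding e_def by blast
  next
    case True
    have "s \<notin> pw 1" using v(2) piL[OF True] rs(3) by blast
    then have su: "s \<noteq> 0" "val s = 0" using O_cases[OF rs(2)] by auto
    define e where "e = sv (inverse s) v"
    have eL: "e \<in> L'" unfolding e_def using modc_sv[OF m unit_inv[OF su] v(1)] .
    have rs1: "r * inverse s \<in> pw 1" using pw_mult[OF True, of "inverse s" 0] unit_inv[OF su] O_pw by auto
    have "ad (sv (r * inverse s) a) (sv 0 b) = sv (r * inverse s) a" by (simp add: prod_eq_iff)
    then have "sv (r * inverse s) a \<in> L'"
      using piL[OF rs1 pw_zero, of a b] s1 by (metis psubsetE subsetD)
    moreover have "b = ad e (sv (- 1) (sv (r * inverse s) a))"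
      unfolding e_def rs(3) using su by (simp add: prod_eq_iff field_simps)
    ultimately have bL: "b \<in> L'" using modc_ad[OF m eL modc_sv[OF m m1]] by metis
    have "L' = lat b (sv pi a)"
    proof
      show "lat b (sv pi a) \<subseteq> L'" by (rule lat_least[OF m bL pia])
      show "L' \<subseteq> lat b (sv pi a)"
      proof
        fix z assume zL: "z \<in> L'"
        then have "z \<in> lat a b" using s2 by blast
        then obtain p q where pq: "p \<in> Ri" "q \<in> Ri" "z = ad (sv p a) (sv q b)" unfolding mem_lat by blast
        have z'eq: "ad z (sv (- q) b) = sv p a" unfolding pq(3) by (simp add: prod_eq_iff)
        have z'L: "sv p a \<in> L'" using modc_ad[OF m zL modc_sv[OF m O_uminus[OF pq(2)] bL]] z'eq by simp
        show "z \<in> lat b (sv pi a)"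
        proof (cases "p \<in> pw 1")
          case True
          have "z = ad (sv q b) (sv (p / pi) (sv pi a))"
            unfolding pq(3) using pi_props by (simp add: prod_eq_iff algebra_simps)
          then show ?thesis using lat_mem_comb[OF pq(2) div_pi[OF True]] by metis
        next
          case False
          then have pu: "p \<noteq> 0" "val p = 0" using O_cases[OF pq(1)] by auto
          have "a = sv (inverse p) (sv p a)" using pu by (simp add: prod_eq_iff)
          then have "a \<in> L'" using modc_sv[OF m unit_inv[OF pu] z'L] by simp
          then show ?thesis using bL notboth by blast
        qed
      qed
    qed
    then show ?thesis by blast
  qed
qed

end



context nalf begin

lemma scale_scale: "scale_set d (scale_set c L) = scale_set (d * c) L"
  unfolding scale_set_def image_image by (simp add: split_def mult.assoc)

lemma scale_one: "scale_set 1 L = L"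
  unfolding scale_set_def by (simp add: split_def)

lemma scale_comm: "scale_set d (scale_set c L) = scale_set c (scale_set d L)"
  by (simp add: scale_scale mult.commute)

lemma inj_scale: "(c::'a) \<noteq> 0 \<Longrightarrow> inj (\<lambda>(p, r). (c * p, c * r))"
  unfolding inj_def by (simp add: split_def prod_eq_iff mult_cancel_left)

lemma scale_psubset: "(c::'a) \<noteq> 0 \<Longrightarrow> A \<subset> B \<Longrightarrow> scale_set c A \<subset> scale_set c B"
proof -
  assume c: "c \<noteq> 0" and AB: "A \<subset> B"
  have i: "inj (\<lambda>(p, r). (c * p, c * r))" using inj_scale[OF c] .
  show ?thesis unfolding scale_set_def using AB inj_image_subset_iff[OF i, of A B] inj_image_eq_iff[OF i, of A B]
    by blast
qed

lemma det2_sv: "det2 (sv c u) (sv c w) = c * c * det2 u w"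
  by (simp add: det2_def algebra_simps)

lemma lattice_scale: "lattice val L \<Longrightarrow> c \<noteq> 0 \<Longrightarrow> lattice val (scale_set c L)"
proof -
  assume "lattice val L" "c \<noteq> 0"
  then obtain u w where "det2 u w \<noteq> 0" "L = lat u w" unfolding lattice_iff by blast
  then show ?thesis unfolding lattice_iff using \<open>c \<noteq> 0\<close>
    by (intro exI[of _ "sv c u"] exI[of _ "sv c w"]) (simp add: scale_lat det2_sv)
qed

lemma hclass_mem: "L \<in> hclass L"
proof -
  have "L = scale_set 1 L" by (simp add: scale_one)
  then show ?thesis unfolding hclass_def by auto
qed

lemma hclass_scale: "c \<noteq> 0 \<Longrightarrow> hclass (scale_set c L) = hclass L"
  unfolding hclass_def
proof (intro equalityI subsetI)
  fix Z assume c: "c \<noteq> 0" and "Z \<in> {scale_set d (scale_set c L) |d. d \<noteq> 0}"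
  then obtain d where "d \<noteq> 0" "Z = scale_set (d * c) L" using scale_scale by blast
  then show "Z \<in> {scale_set c L |c. c \<noteq> 0}" using c by auto
next
  fix Z assume c: "c \<noteq> 0" and "Z \<in> {scale_set d L |d. d \<noteq> 0}"
  then obtain d where d: "d \<noteq> 0" "Z = scale_set d L" by blast
  then have "Z = scale_set (d * inverse c) (scale_set c L)" using c by (simp add: scale_scale mult.assoc)
  then show "Z \<in> {scale_set d (scale_set c L) |d. d \<noteq> 0}" using c d by auto
qed

lemma hclass_vert: "lattice val L \<Longrightarrow> hclass L \<in> vertices val"
  unfolding vertices_def by blast

lemma vert_rep: "X \<in> vertices val \<Longrightarrow> L \<in> X \<Longrightarrow> X = hclass L \<and> lattice val L"
proof -
  assume "X \<in> vertices val" "L \<in> X"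
  then obtain K where K: "lattice val K" "X = hclass K" unfolding vertices_def by blast
  then obtain c where c: "c \<noteq> 0" "L = scale_set c K" using \<open>L \<in> X\<close> unfolding hclass_def by blast
  then show ?thesis using K hclass_scale lattice_scale by auto
qed

lemma scale_unit_lat: "lattice val L \<Longrightarrow> u \<noteq> 0 \<Longrightarrow> val u = 0 \<Longrightarrow> scale_set u L = L"
proof -
  assume "lattice val L" and u: "u \<noteq> 0" "val u = 0"
  then obtain a b where L: "L = lat a b" unfolding lattice_iff by blast
  have uR: "u \<in> Ri" using unit_Ri[OF u] .
  have iu: "inverse u \<in> Ri" using unit_inv[OF u] .
  have "lat (sv u a) (sv u b) = lat a b"
  proof (rule lat_eqI)
    have "sv u a = ad (sv u a) (sv 0 b)" "sv u b = ad (sv 0 a) (sv u b)" by (simp_all add: prod_eq_iff)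
    then show "sv u a \<in> lat a b" "sv u b \<in> lat a b" using lat_mem_comb[OF uR O_0] lat_mem_comb[OF O_0 uR] by metis+
    have "a = ad (sv (inverse u) (sv u a)) (sv 0 (sv u b))" "b = ad (sv 0 (sv u a)) (sv (inverse u) (sv u b))"
      using u by (simp_all add: prod_eq_iff)
    then show "a \<in> lat (sv u a) (sv u b)" "b \<in> lat (sv u a) (sv u b)"
      using lat_mem_comb[OF iu O_0] lat_mem_comb[OF O_0 iu] by metis+
  qed
  then show ?thesis using L scale_lat by simp
qed

lemma adj_rep:
  assumes "adj val X Y" "L0 \<in> X"
  shows "\<exists>L'\<in>Y. scale_set pi L0 \<subset> L' \<and> L' \<subset> L0"
proof -
  obtain L L1 \<pi> where X: "X \<in> vertices val" and Y: "Y \<in> vertices val" and LX: "L \<in> X" and L1: "L1 \<in> Y"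
    and p: "\<pi> \<noteq> 0" "val \<pi> = 1" and s: "scale_set \<pi> L \<subset> L1" "L1 \<subset> L"
    using assms(1) unfolding adj_def by blast
  have XL: "X = hclass L" using vert_rep[OF X LX] by simp
  obtain c where c: "c \<noteq> 0" "L0 = scale_set c L" using assms(2) unfolding XL hclass_def by blast
  have L0lat: "lattice val L0" using vert_rep[OF X assms(2)] by simp
  have YL: "Y = hclass L1" using vert_rep[OF Y L1] by simp
  have inY: "scale_set c L1 \<in> Y" unfolding YL hclass_def using c by blast
  have u: "\<pi> / pi \<noteq> 0" "val (\<pi> / pi) = 0" using p pi_props by (auto simp: val_divide)
  have "scale_set c (scale_set \<pi> L) = scale_set \<pi> L0" using c scale_comm by simp
  also have "\<dots> = scale_set pi (scale_set (\<pi> / pi) L0)" using pi_props by (simp add: scale_scale)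
  also have "\<dots> = scale_set pi L0" using scale_unit_lat[OF L0lat u] by simp
  finally have e: "scale_set c (scale_set \<pi> L) = scale_set pi L0" .
  have "scale_set pi L0 \<subset> scale_set c L1" using scale_psubset[OF c(1) s(1)] e by simp
  moreover have "scale_set c L1 \<subset> L0" using scale_psubset[OF c(1) s(2)] c(2) by simp
  ultimately show ?thesis using inY by blast
qed

end



context nalf begin

lemma ad_sv0: "ad a (sv 0 b) = a" by (simp add: prod_eq_iff)

lemma pi_pow_nz: "pi ^ n \<noteq> 0" using pi_props by simp

lemma val_pi_pow: "val (pi ^ n) = int n" using val_power[OF pi_props(1)] pi_props by simp

lemma Ri_pi_pow: "t \<in> Ri \<Longrightarrow> t * pi ^ n \<in> pw (int n)"
proof -
  assume "t \<in> Ri"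
  then have "t \<in> pw 0" using O_pw by simp
  moreover have "pi ^ n \<in> pw (int n)" unfolding pw_def using val_pi_pow by simp
  ultimately show ?thesis using pw_mult by fastforce
qed

lemma div_pi_pow: "z \<in> pw (int n) \<Longrightarrow> z / pi ^ n \<in> Ri"
  unfolding pw_def ring_int_def using pi_pow_nz
  by (cases "z = 0") (auto simp: val_divide val_pi_pow)

lemma pi_pow_Ri: "pi ^ n \<in> Ri" unfolding ring_int_def using val_pi_pow by simp

lemma det2_ad_sv: "det2 (ad a (sv t b)) b = det2 a b"
  by (simp add: det2_def algebra_simps)

lemma lattice_modc: "lattice val L \<Longrightarrow> modc L"
  unfolding lattice_iff using modc_lat by blast

lemma ray:
  fixes y :: "nat \<Rightarrow> ('a \<times> 'a) set set"
  assumes adjy: "\<And>k. adj val (y k) (y (Suc k))" and nb: "\<And>k. y (Suc (Suc k)) \<noteq> y k"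
    and L0: "L0 \<in> y 0"
  shows "\<exists>a b. det2 a b \<noteq> 0 \<and> lat a b = L0 \<and> (\<forall>k. lat a (sv (pi ^ k) b) \<in> y k)"
proof -
  have vert: "y k \<in> vertices val" for k using adjy[of k] unfolding adj_def by blast
  define P where "P k L L' \<longleftrightarrow> L' \<in> y (Suc k) \<and> scale_set pi L \<subset> L' \<and> L' \<subset> L" for k L L'
  define Ls where "Ls = rec_nat L0 (\<lambda>k L. SOME L'. P k L L')"
  have Ls0: "Ls 0 = L0" and LsS: "Ls (Suc k) = (SOME L'. P k (Ls k) L')" for k unfolding Ls_def by simp_all
  have Lsy: "Ls k \<in> y k" for k
  proof (induction k)
    case 0 then show ?case using L0 Ls0 by simp
  next
    case (Suc k)
    have ex: "\<exists>L'. P k (Ls k) L'" unfolding P_def using adj_rep[OF adjy Suc] by blast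
    have "P k (Ls k) (Ls (Suc k))" using someI_ex[OF ex] by (simp only: LsS)
    then show ?case unfolding P_def by blast
  qed
  have LsP: "P k (Ls k) (Ls (Suc k))" for k
  proof -
    have ex: "\<exists>L'. P k (Ls k) L'" unfolding P_def using adj_rep[OF adjy Lsy[of k]] by blast
    show ?thesis using someI_ex[OF ex] by (simp only: LsS)
  qed
  have Lslat: "lattice val (Ls k)" for k using vert_rep[OF vert Lsy] by blast
  have Lsnb: "Ls (Suc (Suc k)) \<noteq> scale_set pi (Ls k)" for k
  proof
    assume e: "Ls (Suc (Suc k)) = scale_set pi (Ls k)"
    have "y (Suc (Suc k)) = hclass (Ls (Suc (Suc k)))" using vert_rep[OF vert Lsy] by blast
    also have "\<dots> = hclass (Ls k)" unfolding e using hclass_scale pi_props by blast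
    also have "\<dots> = y k" using vert_rep[OF vert Lsy] by blast
    finally show False using nb by blast
  qed
  obtain a0 b where ab: "det2 a0 b \<noteq> 0" "L0 = lat a0 b" "Ls 1 = lat a0 (sv pi b)"
  proof -
    obtain a' b' where ab': "det2 a' b' \<noteq> 0" "L0 = lat a' b'" using Lslat[of 0] Ls0 unfolding lattice_iff by blast
    have s1: "lat (sv pi a') (sv pi b') \<subset> Ls 1" using LsP[of 0] Ls0 ab'(2) scale_lat unfolding P_def by simp
    have s2: "Ls 1 \<subset> lat a' b'" using LsP[of 0] Ls0 ab'(2) unfolding P_def by simp
    from step[OF ab'(1) lattice_modc[OF Lslat] s1 s2]
    show ?thesis
    proof
      assume "\<exists>t\<in>Ri. Ls 1 = lat (ad a' (sv t b')) (sv pi b')"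
      then obtain t where "t \<in> Ri" "Ls 1 = lat (ad a' (sv t b')) (sv pi b')" by blast
      then show ?thesis using that[of "ad a' (sv t b')" b'] ab' det2_ad_sv lat_shear by metis
    next
      assume "Ls 1 = lat b' (sv pi a')"
      moreover have "det2 b' a' \<noteq> 0" using ab'(1) by (simp add: det2_def algebra_simps)
      ultimately show ?thesis using that[of b' a'] ab' lat_comm by metis
    qed
  qed
  define A where "A s = ad a0 (sv s b)" for s
  define Q where "Q k s \<longleftrightarrow> s \<in> Ri \<and> Ls k = lat (A s) (sv (pi ^ k) b) \<and> Ls (Suc k) = lat (A s) (sv (pi ^ Suc k) b)" for k s
  have Q0: "Q 0 0" unfolding Q_def A_def using ab Ls0 by (simp add: ad_sv0)
  have Qstep: "\<exists>t\<in>Ri. Q (Suc k) (s + t * pi ^ Suc k)" if Qk: "Q k s" for k s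
  proof -
    define B where "B = sv (pi ^ Suc k) b"
    have sR: "s \<in> Ri" and e1: "Ls k = lat (A s) (sv (pi ^ k) b)" and e2: "Ls (Suc k) = lat (A s) B"
      using Qk unfolding Q_def B_def by auto
    have dAB: "det2 (A s) B \<noteq> 0"
    proof -
      have "det2 (A s) B = pi ^ Suc k * det2 a0 b" unfolding A_def B_def by (simp add: det2_def algebra_simps)
      then show ?thesis using ab(1) pi_pow_nz[of "Suc k"] by (simp only: mult_eq_0_iff) blast
    qed
    have s1: "lat (sv pi (A s)) (sv pi B) \<subset> Ls (Suc (Suc k))" using LsP[of "Suc k"] e2 scale_lat unfolding P_def by simp
    have s2: "Ls (Suc (Suc k)) \<subset> lat (A s) B" using LsP[of "Suc k"] e2 unfolding P_def by simp
    from step[OF dAB lattice_modc[OF Lslat] s1 s2]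
    show ?thesis
    proof
      assume "\<exists>t\<in>Ri. Ls (Suc (Suc k)) = lat (ad (A s) (sv t B)) (sv pi B)"
      then obtain t where t: "t \<in> Ri" "Ls (Suc (Suc k)) = lat (ad (A s) (sv t B)) (sv pi B)" by blast
      have eA: "ad (A s) (sv t B) = A (s + t * pi ^ Suc k)" unfolding A_def B_def by (simp add: prod_eq_iff algebra_simps)
      have eB: "sv pi B = sv (pi ^ Suc (Suc k)) b" unfolding B_def by (simp add: prod_eq_iff algebra_simps)
      have "Ls (Suc k) = lat (ad (A s) (sv t B)) B" using e2 lat_shear[OF t(1)] by simp
      then have "Q (Suc k) (s + t * pi ^ Suc k)"
        unfolding Q_def using t(2) eA eB O_add[OF sR O_mult[OF t(1) pi_pow_Ri[of "Suc k"]]] B_def by simp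
      then show ?thesis using t(1) by blast
    next
      assume e3: "Ls (Suc (Suc k)) = lat B (sv pi (A s))"
      have "scale_set pi (Ls k) = lat (sv pi (A s)) (sv pi (sv (pi ^ k) b))" using e1 scale_lat by simp
      also have "sv pi (sv (pi ^ k) b) = B" unfolding B_def by (simp add: prod_eq_iff algebra_simps)
      finally have "scale_set pi (Ls k) = Ls (Suc (Suc k))" using e3 lat_comm by simp
      then show ?thesis using Lsnb by metis
    qed
  qed
  define S where "S = rec_nat 0 (\<lambda>k s. SOME s'. (\<exists>t\<in>Ri. s' = s + t * pi ^ Suc k) \<and> Q (Suc k) s')"
  have S0: "S 0 = 0" and SS: "S (Suc k) = (SOME s'. (\<exists>t\<in>Ri. s' = S k + t * pi ^ Suc k) \<and> Q (Suc k) s')" for k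
    unfolding S_def by simp_all
  have SQ: "Q k (S k) \<and> (\<exists>t\<in>Ri. S (Suc k) = S k + t * pi ^ Suc k) \<and> Q (Suc k) (S (Suc k))" for k
  proof (induction k)
    case 0
    have "\<exists>s'. (\<exists>t\<in>Ri. s' = S 0 + t * pi ^ Suc 0) \<and> Q (Suc 0) s'" using Qstep[OF Q0] S0 by auto
    from someI_ex[OF this] show ?case using Q0 S0 SS[of 0] by simp
  next
    case (Suc k)
    then have q: "Q (Suc k) (S (Suc k))" by blast
    have "\<exists>s'. (\<exists>t\<in>Ri. s' = S (Suc k) + t * pi ^ Suc (Suc k)) \<and> Q (Suc (Suc k)) s'" using Qstep[OF q] by auto
    from someI_ex[OF this] show ?case using q SS[of "Suc k"] by simp
  qed
  have Sinc: "S (Suc k) - S k \<in> pw (int (Suc k))" for k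
  proof -
    obtain t where "t \<in> Ri" "S (Suc k) = S k + t * pi ^ Suc k" using SQ[of k] by blast
    then show ?thesis using Ri_pi_pow[of t "Suc k"] by simp
  qed
  have Scauchy: "S m - S n \<in> pw (int n)" if "n \<le> m" for m n
    using that
  proof (induction m)
    case 0 then show ?case by simp
  next
    case (Suc m)
    show ?case
    proof (cases "n = Suc m")
      case True then show ?thesis by simp
    next
      case False
      then have "S m - S n \<in> pw (int n)" using Suc by simp
      moreover have "S (Suc m) - S m \<in> pw (int n)" using Sinc[of m] pw_mono False Suc.prems by simp
      ultimately show ?thesis using pw_add by fastforce
    qed
  qed
  have Scauchy2: "S m - S n \<in> pw (int (min m n))" for m n
  proof (cases "n \<le> m")
    case True then show ?thesis using Scauchy by simp
  next
    case False
    then have "S n - S m \<in> pw (int m)" using Scauchy by simp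
    then show ?thesis using pw_uminus False by fastforce
  qed
  have "\<forall>N::int. \<exists>M. \<forall>m\<ge>M. \<forall>n\<ge>M. S m - S n = 0 \<or> N \<le> val (S m - S n)"
  proof
    fix N :: int
    show "\<exists>M. \<forall>m\<ge>M. \<forall>n\<ge>M. S m - S n = 0 \<or> N \<le> val (S m - S n)"
    proof (intro exI[of _ "nat N"] allI impI)
      fix m n assume "nat N \<le> m" "nat N \<le> n"
      then have "N \<le> int (min m n)" by simp
      then show "S m - S n = 0 \<or> N \<le> val (S m - S n)" using Scauchy2[of m n] pw_mono unfolding pw_def by blast
    qed
  qed
  from complete[OF this] obtain l where l: "\<forall>N::int. \<exists>M. \<forall>n\<ge>M. S n - l = 0 \<or> N \<le> val (S n - l)" by blast
  have Sl: "S k - l \<in> pw (int k)" for k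
  proof -
    obtain M where M: "\<forall>n\<ge>M. S n - l = 0 \<or> int k \<le> val (S n - l)" using l by blast
    define n where "n = max M k"
    have "S n - l \<in> pw (int k)" using M unfolding n_def pw_def by simp
    moreover have "S k - S n \<in> pw (int k)" using Scauchy2[of k n] pw_mono unfolding n_def by simp
    ultimately show ?thesis using pw_add by fastforce
  qed
  have lR: "l \<in> Ri"
  proof -
    have "S 0 - l \<in> Ri" using Sl[of 0] O_pw by simp
    then show ?thesis using S0 O_uminus by fastforce
  qed
  define a where "a = A l"
  have "det2 a b \<noteq> 0" unfolding a_def A_def using det2_ad_sv ab(1) by simp
  moreover have "lat a b = L0" unfolding a_def A_def using lat_shear[OF lR] ab(2) by simp
  moreover have "lat a (sv (pi ^ k) b) \<in> y k" for k
  proof -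
    define r where "r = (l - S k) / pi ^ k"
    have rR: "r \<in> Ri" unfolding r_def using div_pi_pow pw_uminus[OF Sl[of k]] by fastforce
    have "a = ad (A (S k)) (sv r (sv (pi ^ k) b))"
      unfolding a_def A_def r_def using pi_pow_nz[of k] pi_props(1) by (simp add: prod_eq_iff field_simps)
    then have "lat a (sv (pi ^ k) b) = lat (A (S k)) (sv (pi ^ k) b)" using lat_shear[OF rR] by simp
    also have "\<dots> = Ls k" using SQ[of k] unfolding Q_def by simp
    finally show ?thesis using Lsy by simp
  qed
  ultimately show ?thesis by blast
qed

end



context nalf begin

definition mdet :: "'a \<times> 'a \<times> 'a \<times> 'a \<Rightarrow> 'a" where
  "mdet M = (case M of (a, b, c, d) \<Rightarrow> a * d - b * c)"

definition minv :: "'a \<times> 'a \<times> 'a \<times> 'a \<Rightarrow> 'a \<times> 'a \<times> 'a \<times> 'a" where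
  "minv M = (case M of (a, b, c, d) \<Rightarrow> (d / mdet M, - b / mdet M, - c / mdet M, a / mdet M))"

lemma GL2_iff: "M \<in> GL2 \<longleftrightarrow> mdet M \<noteq> 0"
  unfolding GL2_def mdet_def by (cases M) auto

lemma mat_vec_lin: "mat_vec M (ad (sv r u) (sv s w)) = ad (sv r (mat_vec M u)) (sv s (mat_vec M w))"
  unfolding mat_vec_def by (cases M; cases u; cases w) (simp add: algebra_simps)

lemma mat_vec_sv: "mat_vec M (sv r u) = sv r (mat_vec M u)"
  unfolding mat_vec_def by (cases M; cases u) (simp add: algebra_simps)

lemma img_lat: "mat_vec M ` lat u w = lat (mat_vec M u) (mat_vec M w)"
proof
  show "mat_vec M ` lat u w \<subseteq> lat (mat_vec M u) (mat_vec M w)"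
    unfolding lat_def using mat_vec_lin by fastforce
  show "lat (mat_vec M u) (mat_vec M w) \<subseteq> mat_vec M ` lat u w"
  proof
    fix z assume "z \<in> lat (mat_vec M u) (mat_vec M w)"
    then obtain r s where "r \<in> Ri" "s \<in> Ri" "z = ad (sv r (mat_vec M u)) (sv s (mat_vec M w))"
      unfolding mem_lat by blast
    then show "z \<in> mat_vec M ` lat u w" unfolding lat_def using mat_vec_lin[symmetric] by blast
  qed
qed

lemma det2_img: "det2 (mat_vec M u) (mat_vec M w) = mdet M * det2 u w"
  unfolding mat_vec_def det2_def mdet_def by (cases M; cases u; cases w) (simp add: algebra_simps)

lemma img_scale: "mat_vec M ` scale_set c L = scale_set c (mat_vec M ` L)"
  unfolding scale_set_def image_image
  by (rule image_cong) (auto simp: mat_vec_def split: prod.splits simp: algebra_simps)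

lemma mat_act_hclass: "mat_act M (hclass L) = hclass (mat_vec M ` L)"
  unfolding mat_act_def hclass_def using img_scale by blast

lemma lattice_img: "M \<in> GL2 \<Longrightarrow> lattice val L \<Longrightarrow> lattice val (mat_vec M ` L)"
  unfolding lattice_iff GL2_iff using img_lat det2_img by (metis mult_eq_0_iff)

lemma minv_left: "M \<in> GL2 \<Longrightarrow> mat_vec (minv M) (mat_vec M v) = v"
proof -
  assume M: "M \<in> GL2"
  obtain a b c d where Md: "M = (a, b, c, d)" by (cases M) auto
  obtain p r where v: "v = (p, r)" by (cases v) auto
  define D where "D = a * d - b * c"
  have D: "D \<noteq> 0" using M unfolding GL2_iff mdet_def Md D_def by simp
  have "(d / D) * (a * p + b * r) + (- b / D) * (c * p + d * r) = p"
    using D by (simp add: field_simps) (simp add: D_def; algebra)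
  moreover have "(- c / D) * (a * p + b * r) + (a / D) * (c * p + d * r) = r"
    using D by (simp add: field_simps) (simp add: D_def; algebra)
  ultimately show ?thesis unfolding minv_def mdet_def mat_vec_def Md v D_def by simp
qed

lemma minv_right: "M \<in> GL2 \<Longrightarrow> mat_vec M (mat_vec (minv M) v) = v"
proof -
  assume M: "M \<in> GL2"
  obtain a b c d where Md: "M = (a, b, c, d)" by (cases M) auto
  obtain p r where v: "v = (p, r)" by (cases v) auto
  define D where "D = a * d - b * c"
  have D: "D \<noteq> 0" using M unfolding GL2_iff mdet_def Md D_def by simp
  have "a * ((d / D) * p + (- b / D) * r) + b * ((- c / D) * p + (a / D) * r) = p"
    using D by (simp add: field_simps) (simp add: D_def; algebra)
  moreover have "c * ((d / D) * p + (- b / D) * r) + d * ((- c / D) * p + (a / D) * r) = r"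
    using D by (simp add: field_simps) (simp add: D_def; algebra)
  ultimately show ?thesis unfolding minv_def mdet_def mat_vec_def Md v D_def by simp
qed

lemma minv_GL2: "M \<in> GL2 \<Longrightarrow> minv M \<in> GL2"
proof -
  assume M: "M \<in> GL2"
  obtain a b c d where Md: "M = (a, b, c, d)" by (cases M) auto
  define D where "D = a * d - b * c"
  have D: "D \<noteq> 0" using M unfolding GL2_iff mdet_def Md D_def by simp
  have "(d / D) * (a / D) - (- b / D) * (- c / D) = (a * d - b * c) / (D * D)"
    using D by (simp add: field_simps)
  also have "\<dots> = 1 / D" using D unfolding D_def[symmetric] by simp
  finally have e: "(d / D) * (a / D) - (- b / D) * (- c / D) = 1 / D" .
  have "minv M = (d / D, - b / D, - c / D, a / D)" unfolding minv_def mdet_def Md D_def by simp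
  then have "mdet (minv M) = 1 / D" using e unfolding mdet_def by simp
  then show ?thesis unfolding GL2_iff using D by simp
qed

lemma mat_act_inv: "M \<in> GL2 \<Longrightarrow> mat_act (minv M) (mat_act M X) = X"
  unfolding mat_act_def image_image using minv_left by (simp add: image_image)

end



context nalf begin

lemma inj_mat: "(M :: 'a \<times> 'a \<times> 'a \<times> 'a) \<in> GL2 \<Longrightarrow> inj (mat_vec M)"
proof (rule injI)
  fix x y assume M: "M \<in> GL2" and "mat_vec M x = mat_vec M y"
  then have "mat_vec (minv M) (mat_vec M x) = mat_vec (minv M) (mat_vec M y)" by simp
  then show "x = y" using minv_left[OF M] by simp
qed

lemma mat_act_inv2: "M \<in> GL2 \<Longrightarrow> mat_act M (mat_act (minv M) X) = X"
  unfolding mat_act_def image_image using minv_right by (simp add: image_image)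

lemma vert_mat: "M \<in> GL2 \<Longrightarrow> X \<in> vertices val \<Longrightarrow> mat_act M X \<in> vertices val"
proof -
  assume M: "M \<in> GL2" and "X \<in> vertices val"
  then obtain K where K: "lattice val K" "X = hclass K" unfolding vertices_def by blast
  have "mat_act M X = hclass (mat_vec M ` K)" using K(2) mat_act_hclass[of M K] by simp
  then show ?thesis using hclass_vert[OF lattice_img[OF M K(1)]] by simp
qed

lemma adj_mat:
  assumes M: "M \<in> GL2" and a: "adj val X Y"
  shows "adj val (mat_act M X) (mat_act M Y)"
proof -
  obtain L L' \<pi> where X: "X \<in> vertices val" and Y: "Y \<in> vertices val" and LX: "L \<in> X" and L'Y: "L' \<in> Y"
    and p: "\<pi> \<noteq> 0" "val \<pi> = 1" and s: "scale_set \<pi> L \<subset> L'" "L' \<subset> L"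
    using a unfolding adj_def by blast
  have i: "inj (mat_vec M)" using inj_mat[OF M] .
  have psub: "A \<subset> B \<Longrightarrow> mat_vec M ` A \<subset> mat_vec M ` B" for A B
    using inj_image_subset_iff[OF i, of A B] inj_image_eq_iff[OF i, of A B] by blast
  have LX': "mat_vec M ` L \<in> mat_act M X" unfolding mat_act_def using LX by blast
  have LY': "mat_vec M ` L' \<in> mat_act M Y" unfolding mat_act_def using L'Y by blast
  have s1: "scale_set \<pi> (mat_vec M ` L) \<subset> mat_vec M ` L'" using psub[OF s(1)] img_scale[of M \<pi> L] by simp
  have s2: "mat_vec M ` L' \<subset> mat_vec M ` L" using psub[OF s(2)] .
  have "\<exists>La\<in>mat_act M X. \<exists>Lb\<in>mat_act M Y. \<exists>\<pi>'. \<pi>' \<noteq> 0 \<and> val \<pi>' = 1 \<and> scale_set \<pi>' La \<subset> Lb \<and> Lb \<subset> La"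
  proof (rule bexI[where x="mat_vec M ` L"], rule bexI[where x="mat_vec M ` L'"])
    show "\<exists>\<pi>'. \<pi>' \<noteq> 0 \<and> val \<pi>' = 1 \<and> scale_set \<pi>' (mat_vec M ` L) \<subset> mat_vec M ` L' \<and> mat_vec M ` L' \<subset> mat_vec M ` L"
      by (intro exI[of _ \<pi>] conjI p s1 s2)
  qed (rule LY', rule LX')
  then show ?thesis unfolding adj_def by (rule conjI[OF vert_mat[OF M X] conjI[OF vert_mat[OF M Y]]])
qed

lemma path_mat:
  assumes M: "M \<in> GL2" and "\<exists>p. p 0 = X \<and> p n = Y \<and> (\<forall>i<n. adj val (p i) (p (Suc i)))"
  shows "\<exists>p. p 0 = mat_act M X \<and> p n = mat_act M Y \<and> (\<forall>i<n. adj val (p i) (p (Suc i)))"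
proof -
  obtain p where p: "p 0 = X" "p n = Y" "\<forall>i<n. adj val (p i) (p (Suc i))" using assms(2) by blast
  show ?thesis
    by (rule exI[of _ "\<lambda>i. mat_act M (p i)"]) (use p adj_mat[OF M] in auto)
qed

lemma dist_mat: "M \<in> GL2 \<Longrightarrow> dist_tree val (mat_act M X) (mat_act M Y) = dist_tree val X Y"
proof -
  assume M: "M \<in> GL2"
  have "(\<lambda>n. \<exists>p. p 0 = mat_act M X \<and> p n = mat_act M Y \<and> (\<forall>i<n. adj val (p i) (p (Suc i))))
      = (\<lambda>n. \<exists>p. p 0 = X \<and> p n = Y \<and> (\<forall>i<n. adj val (p i) (p (Suc i))))"
  proof (rule ext, rule iffI)
    fix n assume "\<exists>p. p 0 = mat_act M X \<and> p n = mat_act M Y \<and> (\<forall>i<n. adj val (p i) (p (Suc i)))"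
    from path_mat[OF minv_GL2[OF M] this]
    show "\<exists>p. p 0 = X \<and> p n = Y \<and> (\<forall>i<n. adj val (p i) (p (Suc i)))" using mat_act_inv[OF M] by simp
  next
    fix n assume "\<exists>p. p 0 = X \<and> p n = Y \<and> (\<forall>i<n. adj val (p i) (p (Suc i)))"
    from path_mat[OF M this]
    show "\<exists>p. p 0 = mat_act M X \<and> p n = mat_act M Y \<and> (\<forall>i<n. adj val (p i) (p (Suc i)))" .
  qed
  then show ?thesis unfolding dist_tree_def by simp
qed

lemma mat_Aut: "M \<in> GL2 \<Longrightarrow> mat_act M \<in> Aut val"
proof -
  assume M: "M \<in> GL2"
  have "bij_betw (mat_act M) (vertices val) (vertices val)"
    by (rule bij_betw_byWitness[where f'="mat_act (minv M)"])
       (use mat_act_inv[OF M] mat_act_inv2[OF M] vert_mat[OF M] vert_mat[OF minv_GL2[OF M]] in auto)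
  then show ?thesis unfolding Aut_def using dist_mat[OF M] by blast
qed

lemma mat_Ghat: "M \<in> GL2 \<Longrightarrow> mat_act M \<in> Ghat val e"
  unfolding Ghat_def using mat_Aut by blast

definition mmul :: "'a \<times> 'a \<times> 'a \<times> 'a \<Rightarrow> 'a \<times> 'a \<times> 'a \<times> 'a \<Rightarrow> 'a \<times> 'a \<times> 'a \<times> 'a" where
  "mmul X Y = (case X of (a, b, c, d) \<Rightarrow> case Y of (a', b', c', d') \<Rightarrow>
     (a * a' + b * c', a * b' + b * d', c * a' + d * c', c * b' + d * d'))"

lemma mmul_vec: "mat_vec (mmul X Y) v = mat_vec X (mat_vec Y v)"
  unfolding mmul_def mat_vec_def by (cases X; cases Y; cases v) (simp add: algebra_simps)

lemma mdet_mmul: "mdet (mmul X Y) = mdet X * mdet Y"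
  unfolding mmul_def mdet_def by (cases X; cases Y) (simp add: algebra_simps)

lemma mat_exists:
  assumes "det2 u w \<noteq> 0" "det2 p q \<noteq> 0"
  shows "\<exists>M\<in>GL2. mat_vec M u = p \<and> mat_vec M w = q"
proof -
  obtain u1 u2 w1 w2 p1 p2 q1 q2 where uw: "u = (u1, u2)" "w = (w1, w2)" "p = (p1, p2)" "q = (q1, q2)"
    by (cases u; cases w; cases p; cases q) auto
  define A where "A = (u1, w1, u2, w2)"
  define B where "B = (p1, q1, p2, q2)"
  have A: "A \<in> GL2" using assms(1) unfolding GL2_iff A_def mdet_def det2_def uw by (simp add: algebra_simps)
  have B: "B \<in> GL2" using assms(2) unfolding GL2_iff B_def mdet_def det2_def uw by (simp add: algebra_simps)
  have Au: "mat_vec A (1, 0) = u" "mat_vec A (0, 1) = w" unfolding A_def mat_vec_def uw by simp_all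
  have Bp: "mat_vec B (1, 0) = p" "mat_vec B (0, 1) = q" unfolding B_def mat_vec_def uw by simp_all
  define M where "M = mmul B (minv A)"
  have i1: "mat_vec (minv A) u = (1, 0)" using minv_left[OF A, of "(1, 0)"] Au(1) by simp
  have i2: "mat_vec (minv A) w = (0, 1)" using minv_left[OF A, of "(0, 1)"] Au(2) by simp
  have "M \<in> GL2" unfolding M_def GL2_iff mdet_mmul using A B minv_GL2[OF A] unfolding GL2_iff by simp
  moreover have "mat_vec M u = p" unfolding M_def mmul_vec i1 using Bp(1) .
  moreover have "mat_vec M w = q" unfolding M_def mmul_vec i2 using Bp(2) .
  ultimately show ?thesis by blast
qed

lemma adj_sym: "adj val X Y \<Longrightarrow> adj val Y X"
proof -
  assume a: "adj val X Y"
  obtain L L' \<pi> where X: "X \<in> vertices val" and Y: "Y \<in> vertices val" and LX: "L \<in> X" and L'Y: "L' \<in> Y"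
    and p: "\<pi> \<noteq> 0" "val \<pi> = 1" and s: "scale_set \<pi> L \<subset> L'" "L' \<subset> L"
    using a unfolding adj_def by blast
  have XX: "scale_set \<pi> L \<in> X" using vert_rep[OF X LX] p unfolding hclass_def by blast
  have ss: "scale_set \<pi> L' \<subset> scale_set \<pi> L" using scale_psubset[OF p(1) s(2)] .
  have "\<exists>La\<in>Y. \<exists>Lb\<in>X. \<exists>\<pi>'. \<pi>' \<noteq> 0 \<and> val \<pi>' = 1 \<and> scale_set \<pi>' La \<subset> Lb \<and> Lb \<subset> La"
  proof (rule bexI[where x=L'], rule bexI[where x="scale_set \<pi> L"])
    show "\<exists>\<pi>'. \<pi>' \<noteq> 0 \<and> val \<pi>' = 1 \<and> scale_set \<pi>' L' \<subset> scale_set \<pi> L \<and> scale_set \<pi> L \<subset> L'"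
      by (intro exI[of _ \<pi>] conjI p ss s(1))
  qed (rule XX, rule L'Y)
  then show ?thesis unfolding adj_def by (rule conjI[OF Y conjI[OF X]])
qed

end



context nalf begin

lemma aux_solve:
  fixes r p A C D s r2 s2 :: "'b::field"
  assumes "r \<noteq> 0" "p \<noteq> 0" "C = r * A + s * (r2 * C + s2 * D)"
  shows "A = (1 - s * r2) * inverse r * C + (- (s / p) * s2 * inverse r) * (p * D)"
proof -
  have e: "(1 - s * r2) * inverse r * C + (- (s / p) * s2 * inverse r) * (p * D) = ((1 - s * r2) * C - s * s2 * D) * inverse r"
    using assms(1,2) by (simp add: field_simps)
  have "(1 - s * r2) * C - s * s2 * D = r * A" using assms(3) by algebra
  then show ?thesis using e assms(1) by simp
qed

lemma ends:
  assumes dab: "det2 a b \<noteq> 0" and dcd: "det2 c d \<noteq> 0" and eq: "lat a b = lat c d"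
    and ne: "lat a (sv pi b) \<noteq> lat c (sv pi d)"
  shows "\<exists>r s. r \<in> Ri \<and> s \<noteq> 0 \<and> val s = 0 \<and> c = ad (sv r a) (sv s b)"
proof -
  have "c \<in> lat a b" using eq lat_gen by simp
  then obtain r s where rs: "r \<in> Ri" "s \<in> Ri" "c = ad (sv r a) (sv s b)" unfolding mem_lat by blast
  show ?thesis
  proof (cases "s \<in> pw 1")
    case False
    then show ?thesis using O_cases[OF rs(2)] rs by blast
  next
    case sp: True
    have ru: "r \<noteq> 0 \<and> val r = 0"
    proof (rule ccontr)
      assume "\<not> (r \<noteq> 0 \<and> val r = 0)"
      then have rp: "r \<in> pw 1" using O_cases[OF rs(1)] by blast
      have "c \<in> lat (sv pi a) (sv pi b)" using piL[OF rp sp] rs(3) by simp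
      also have "\<dots> = scale_set pi (lat c d)" using scale_lat[of pi a b] eq by simp
      also have "\<dots> = lat (sv pi c) (sv pi d)" using scale_lat by simp
      finally obtain e f where ef: "e \<in> Ri" "f \<in> Ri" "c = ad (sv e (sv pi c)) (sv f (sv pi d))"
        unfolding mem_lat by blast
      have "ad (sv (e * pi) c) (sv (f * pi) d) = ad (sv 1 c) (sv 0 d)"
        using ef(3) by (simp add: prod_eq_iff algebra_simps)
      then have "e * pi = 1" using coord_unique[OF dcd] by blast
      moreover have "e \<noteq> 0" using calculation by auto
      ultimately have "val 1 = val e + 1" using val_mult[of e pi] pi_props by simp
      moreover have "0 \<le> val e" using ef(1) \<open>e \<noteq> 0\<close> unfolding ring_int_def by simp
      ultimately show False by simp
    qed
    have ir: "inverse r \<in> Ri" using unit_inv ru by blast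
    have spi: "s / pi \<in> Ri" using div_pi[OF sp] .
    have "b \<in> lat c d" using eq lat_gen by metis
    then obtain r2 s2 where b: "r2 \<in> Ri" "s2 \<in> Ri" "b = ad (sv r2 c) (sv s2 d)" unfolding mem_lat by blast
    have "d \<in> lat a b" using eq lat_gen by metis
    then obtain r3 s3 where d: "r3 \<in> Ri" "s3 \<in> Ri" "d = ad (sv r3 a) (sv s3 b)" unfolding mem_lat by blast
    have "lat a (sv pi b) = lat c (sv pi d)"
    proof (rule lat_eqI)
      have "a = ad (sv ((1 - s * r2) * inverse r) c) (sv (- (s / pi) * s2 * inverse r) (sv pi d))"
      proof -
        have "c = ad (sv r a) (sv s (ad (sv r2 c) (sv s2 d)))" using rs(3) b(3) by simp
        then have h1: "fst c = r * fst a + s * (r2 * fst c + s2 * fst d)"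
          and h2: "snd c = r * snd a + s * (r2 * snd c + s2 * snd d)" by (simp_all add: prod_eq_iff)
        have "fst a = (1 - s * r2) * inverse r * fst c + (- (s / pi) * s2 * inverse r) * (pi * fst d)"
          using aux_solve[OF _ pi_props(1) h1] ru by blast
        moreover have "snd a = (1 - s * r2) * inverse r * snd c + (- (s / pi) * s2 * inverse r) * (pi * snd d)"
          using aux_solve[OF _ pi_props(1) h2] ru by blast
        ultimately show ?thesis by (simp add: prod_eq_iff)
      qed
      moreover have "(1 - s * r2) * inverse r \<in> Ri" using O_mult[OF O_diff[OF O_1 O_mult[OF rs(2) b(1)]] ir] .
      moreover have "- (s / pi) * s2 * inverse r \<in> Ri" using O_mult[OF O_mult[OF O_uminus[OF spi] b(2)] ir] .
      ultimately show "a \<in> lat c (sv pi d)" using lat_mem_comb by metis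
      have "sv pi b = ad (sv (pi * r2) c) (sv s2 (sv pi d))" using b(3) by (simp add: prod_eq_iff algebra_simps)
      then show "sv pi b \<in> lat c (sv pi d)" using lat_mem_comb[OF O_mult[OF pi_Ri b(1)] b(2)] by metis
      have "c = ad (sv r a) (sv (s / pi) (sv pi b))" using rs(3) pi_props by (simp add: prod_eq_iff)
      then show "c \<in> lat a (sv pi b)" using lat_mem_comb[OF rs(1) spi] by metis
      have "sv pi d = ad (sv (pi * r3) a) (sv s3 (sv pi b))" using d(3) by (simp add: prod_eq_iff algebra_simps)
      then show "sv pi d \<in> lat a (sv pi b)" using lat_mem_comb[OF O_mult[OF pi_Ri d(1)] d(2)] by metis
    qed
    then show ?thesis using ne by blast
  qed
qed

end



context nalf begin

lemma det2_unit: "det2 a (ad (sv r a) (sv s b)) = s * det2 a b"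
  by (simp add: det2_def algebra_simps)

lemma main_loc:
  fixes x :: "int \<Rightarrow> ('a \<times> 'a) set set"
  assumes path: "doubly_infinite_path val x"
  shows "\<exists>\<alpha>\<in>Ghat val e. \<exists>\<tau>\<in>Ghat val e. \<forall>n. \<alpha> (x n) = x (- n) \<and> \<tau> (x n) = x (n + 1)"
proof -
  have injx: "inj x" and vx: "\<And>n. x n \<in> vertices val" and ax: "\<And>n. adj val (x n) (x (n + 1))"
    using path unfolding doubly_infinite_path_def by auto
  obtain L0 where L0: "L0 \<in> x 0"
  proof -
    obtain K where "lattice val K" "x 0 = hclass K" using vx[of 0] unfolding vertices_def by blast
    then show ?thesis using that hclass_mem by blast
  qed
  have a1: "adj val (x (int k)) (x (int (Suc k)))" for k using ax[of "int k"] by (simp add: add.commute)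
  have n1: "x (int (Suc (Suc k))) \<noteq> x (int k)" for k
  proof
    assume "x (int (Suc (Suc k))) = x (int k)"
    then have "int (Suc (Suc k)) = int k" using injx unfolding inj_def by blast
    then show False by simp
  qed
  have a2: "adj val (x (- int k)) (x (- int (Suc k)))" for k
    using adj_sym[OF ax[of "- int (Suc k)"]] by simp
  have n2: "x (- int (Suc (Suc k))) \<noteq> x (- int k)" for k
  proof
    assume "x (- int (Suc (Suc k))) = x (- int k)"
    then have "- int (Suc (Suc k)) = - int k" using injx unfolding inj_def by blast
    then show False by simp
  qed
  have L0': "L0 \<in> x (int 0)" "L0 \<in> x (- int 0)" using L0 by simp_all
  obtain a b where ab: "det2 a b \<noteq> 0" "lat a b = L0" "\<And>k. lat a (sv (pi ^ k) b) \<in> x (int k)"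
    using ray[of "\<lambda>k. x (int k)", OF a1 n1 L0'(1)] by blast
  obtain c d where cd: "det2 c d \<noteq> 0" "lat c d = L0" "\<And>k. lat c (sv (pi ^ k) d) \<in> x (- int k)"
    using ray[of "\<lambda>k. x (- int k)", OF a2 n2 L0'(2)] by blast
  have rep: "x n = hclass L" if "L \<in> x n" for n L using vert_rep[OF vx that] by blast
  have ne: "lat a (sv pi b) \<noteq> lat c (sv pi d)"
  proof
    assume e: "lat a (sv pi b) = lat c (sv pi d)"
    have "x 1 = hclass (lat a (sv pi b))" using rep ab(3)[of 1] by simp
    also have "\<dots> = x (- 1)" using rep cd(3)[of 1] e by simp
    finally have "x 1 = x (- 1)" .
    then have "(1::int) = - 1" using injx unfolding inj_def by blast
    then show False by simp
  qed
  obtain r s where rs: "r \<in> Ri" "s \<noteq> 0" "val s = 0" "c = ad (sv r a) (sv s b)"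
    using ends[OF ab(1) cd(1) _ ne] ab(2) cd(2) by auto
  obtain r' s' where rs': "r' \<in> Ri" "s' \<noteq> 0" "val s' = 0" "a = ad (sv r' c) (sv s' d)"
    using ends[OF cd(1) ab(1) _ ne[symmetric]] ab(2) cd(2) by auto
  define Lp where "Lp k = lat a (sv (pi ^ k) c)" for k
  define Ln where "Ln k = lat c (sv (pi ^ k) a)" for k
  have Lp: "Lp k \<in> x (int k)" for k
  proof -
    have "sv (pi ^ k) c = ad (sv (r * pi ^ k) a) (sv s (sv (pi ^ k) b))"
      using rs(4) by (simp add: prod_eq_iff algebra_simps)
    then have "Lp k = lat a (sv (pi ^ k) b)" unfolding Lp_def
      using lat_unit[OF O_mult[OF rs(1) pi_pow_Ri] rs(2,3)] by simp
    then show ?thesis using ab(3) by simp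
  qed
  have Ln: "Ln k \<in> x (- int k)" for k
  proof -
    have "sv (pi ^ k) a = ad (sv (r' * pi ^ k) c) (sv s' (sv (pi ^ k) d))"
      using rs'(4) by (simp add: prod_eq_iff algebra_simps)
    then have "Ln k = lat c (sv (pi ^ k) d)" unfolding Ln_def
      using lat_unit[OF O_mult[OF rs'(1) pi_pow_Ri] rs'(2,3)] by simp
    then show ?thesis using cd(3) by simp
  qed
  have dac: "det2 a c \<noteq> 0" using rs(4) det2_unit[of a r s b] rs(2) ab(1) by simp
  have dca: "det2 c a \<noteq> 0" using dac by (simp add: det2_def algebra_simps)
  have dapc: "det2 a (sv pi c) \<noteq> 0" using dac pi_props by (simp add: det2_def algebra_simps)
  obtain Ma where Ma: "Ma \<in> GL2" "mat_vec Ma a = c" "mat_vec Ma c = a" using mat_exists[OF dac dca] by blast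
  obtain Mt where Mt: "Mt \<in> GL2" "mat_vec Mt a = a" "mat_vec Mt c = sv pi c" using mat_exists[OF dac dapc] by blast
  have al1: "mat_act Ma (x (int k)) = x (- int k)" for k
  proof -
    have "mat_act Ma (x (int k)) = hclass (mat_vec Ma ` Lp k)" using rep[OF Lp] mat_act_hclass by simp
    also have "mat_vec Ma ` Lp k = Ln k" unfolding Lp_def Ln_def img_lat mat_vec_sv Ma by simp
    finally show ?thesis using rep[OF Ln] by simp
  qed
  have al2: "mat_act Ma (x (- int k)) = x (int k)" for k
  proof -
    have "mat_act Ma (x (- int k)) = hclass (mat_vec Ma ` Ln k)" using rep[OF Ln] mat_act_hclass by simp
    also have "mat_vec Ma ` Ln k = Lp k" unfolding Lp_def Ln_def img_lat mat_vec_sv Ma by simp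
    finally show ?thesis using rep[OF Lp] by simp
  qed
  have ta1: "mat_act Mt (x (int k)) = x (int k + 1)" for k
  proof -
    have "mat_act Mt (x (int k)) = hclass (mat_vec Mt ` Lp k)" using rep[OF Lp] mat_act_hclass by simp
    also have "mat_vec Mt ` Lp k = Lp (Suc k)" unfolding Lp_def img_lat mat_vec_sv Mt
      by (simp add: sv_def algebra_simps)
    finally show ?thesis using rep[OF Lp[of "Suc k"]] by (simp add: add.commute)
  qed
  have ta2: "mat_act Mt (x (- int (Suc k))) = x (- int (Suc k) + 1)" for k
  proof -
    have "x (- int (Suc k)) = hclass (Ln (Suc k))" using rep[OF Ln[of "Suc k"]] .
    then have "mat_act Mt (x (- int (Suc k))) = hclass (mat_vec Mt ` Ln (Suc k))" using mat_act_hclass by metis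
    also have "mat_vec Mt ` Ln (Suc k) = lat (sv pi c) (sv pi (sv (pi ^ k) a))" unfolding Ln_def img_lat mat_vec_sv Mt
      by (simp add: sv_def algebra_simps)
    also have "\<dots> = scale_set pi (Ln k)" unfolding Ln_def scale_lat ..
    finally have "mat_act Mt (x (- int (Suc k))) = hclass (Ln k)" using hclass_scale pi_props by simp
    then show ?thesis using rep[OF Ln[of k]] by simp
  qed
  have "\<forall>n. mat_act Ma (x n) = x (- n) \<and> mat_act Mt (x n) = x (n + 1)"
  proof
    fix n :: int
    show "mat_act Ma (x n) = x (- n) \<and> mat_act Mt (x n) = x (n + 1)"
    proof (cases "0 \<le> n")
      case True
      then obtain k where "n = int k" using nonneg_eq_int by blast
      then show ?thesis using al1 ta1 by simp
    next
      case False
      define k where "k = nat (- n - 1)"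
      have k: "n = - int (Suc k)" unfolding k_def using False by simp
      then show ?thesis using al2[of "Suc k"] ta2[of k] by (simp add: add.commute)
    qed
  qed
  then show ?thesis using mat_Ghat[OF Ma(1)] mat_Ghat[OF Mt(1)] by blast
qed

end



theorem mainTheorem7:
  fixes val :: "'a::field \<Rightarrow> int" and e :: nat and x :: "int \<Rightarrow> ('a \<times> 'a) set set"
  assumes "nonarch_local_field val"
    and "e \<ge> 1"
    and "doubly_infinite_path val x"
  shows "\<exists>\<alpha>\<in>Ghat val e. \<exists>\<tau>\<in>Ghat val e. \<forall>n. \<alpha> (x n) = x (- n) \<and> \<tau> (x n) = x (n + 1)"
proof -
  interpret nalf val by (rule nalf.intro) (rule assms(1))
  show ?thesis using main_loc[OF assms(3)] .
qed

end
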